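(* Let $n\ge2$ and let $a,b$ be positive integers with $a<n-1$ and $b<n$. For all $l\in\mathcal{Q}_a$ and $r\in\mathcal{Q}_b$, $$\sum_{q\in\mathcal{Q}_n}\ \sum_{q'\in\mathcal{Q}_{n-1}}\mathbb{P}_q^{q'}\Big(\big\{(L_i,R_i)_{i=0}^{n-1}: L_a=l,\ R_{n-b-1}=r\big\}\Big)\ \le\ 12^{\,2n-b-a-1}.$$
   Context: $\mathcal{Q}_k$ denotes the set of rooted quadrangulations of the sphere with $k$ faces, with the convention that $\mathcal{Q}_0=\{\to\}$ consists of the rooted map with one edge and two vertices; $|\mathcal{Q}_k|=\frac{2\cdot 3^k(2k)!}{k!\,(k+2)!}$, so in particular $|\mathcal{Q}_{k+1}|\le 12|\mathcal{Q}_k|$ for all $k\ge0$. For each $k\ge1$, $g_k:\mathcal{Q}_k\times\mathcal{Q}_{k-1}\to\mathbb{R}_{\ge0}$ is a function such that $\sum_{q'\in\mathcal{Q}_{k-1}}g_k(q,q')=1$ for every $q\in\mathcal{Q}_k$ and $\sum_{q\in\mathcal{Q}_k}g_k(q,q')=|\mathcal{Q}_k|/|\mathcal{Q}_{k-1}|$ for every $q'\in\mathcal{Q}_{k-1}$ (and $g_k(q,q')=0$ unless $q'$ is obtained from $q$ by collapsing a face). For $q\in\mathcal{Q}_n$ and $q'\in\mathcal{Q}_{n-1}$, $\mathbb{P}_q^{q'}$ is the probability measure on the set of sequences $(L_i,R_i)_{i=0}^{n-1}$ with $L_i\in\mathcal{Q}_i$ and $R_i\in\mathcal{Q}_{n-1-i}$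 given by $$\mathbb{P}_q^{q'}\big((L_i,R_i)_{i=0}^{n-1}\big)=g_n(q,R_0)\,1_{L_{n-1}=q'}\prod_{i=0}^{n-2}g_{n-i-1}(R_i,R_{i+1})\,g_{i+1}(L_{i+1},L_i).$$ *)

theory Defs
  imports "HOL-Library.FuncSet" Complex_Main
begin

text \<open>Abstract setting: Q k plays the role of the set of rooted quadrangulations with k faces,
  g k q q' the transition weights.\<close>

definition seq_space :: "(nat \<Rightarrow> 'm set) \<Rightarrow> nat \<Rightarrow> ((nat \<Rightarrow> 'm) \<times> (nat \<Rightarrow> 'm)) set" where
  "seq_space Q n = (PiE {..<n} (\<lambda>i. Q i)) \<times> (PiE {..<n} (\<lambda>i. Q (n - 1 - i)))"

definition Pweight :: "(nat \<Rightarrow> 'm \<Rightarrow> 'm \<Rightarrow> real) \<Rightarrow> nat \<Rightarrow> 'm \<Rightarrow> 'm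
    \<Rightarrow> (nat \<Rightarrow> 'm) \<times> (nat \<Rightarrow> 'm) \<Rightarrow> real" where
  "Pweight g n q q' LR = (case LR of (L, R) \<Rightarrow>
     g n q (R 0) * (if L (n - 1) = q' then 1 else 0) *
     (\<Prod>i<n - 1. g (n - i - 1) (R i) (R (Suc i)) * g (Suc i) (L (Suc i)) (L i)))"

definition Pmeas :: "(nat \<Rightarrow> 'm set) \<Rightarrow> (nat \<Rightarrow> 'm \<Rightarrow> 'm \<Rightarrow> real) \<Rightarrow> nat \<Rightarrow> 'm \<Rightarrow> 'm
    \<Rightarrow> ((nat \<Rightarrow> 'm) \<times> (nat \<Rightarrow> 'm)) set \<Rightarrow> real" where
  "Pmeas Q g n q q' E = (\<Sum>LR \<in> seq_space Q n \<inter> E. Pweight g n q q' LR)"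

end

theory Submission
  imports Defs
begin

lemma sum_PiE_Suc:
  "sum h (PiE {..<Suc k} S) = (\<Sum>f\<in>PiE {..<k} S. \<Sum>y\<in>S k. h (f(k:=y)))"
proof -
  have e: "PiE {..<Suc k} S = (\<lambda>(y,g). g(k:=y)) ` (S k \<times> PiE {..<k} S)"
    by (simp add: lessThan_Suc PiE_insert_eq)
  have "sum h (PiE {..<Suc k} S) = sum (h \<circ> (\<lambda>(y,g). g(k:=y))) (S k \<times> PiE {..<k} S)"
    unfolding e by (rule sum.reindex) (rule inj_combinator, simp)
  also have "\<dots> = (\<Sum>y\<in>S k. \<Sum>f\<in>PiE {..<k} S. h (f(k:=y)))"
    by (simp add: sum.cartesian_product split_def comp_def)
  also have "\<dots> = (\<Sum>f\<in>PiE {..<k} S. \<Sum>y\<in>S k. h (f(k:=y)))"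
    by (rule sum.swap)
  finally show ?thesis .
qed

lemma prod_upd_Suc:
  "(\<Prod>i<Suc k. W i ((f(Suc k := y)) i) ((f(Suc k := y)) (Suc i)))
   = (\<Prod>i<k. W i (f i) (f (Suc i))) * W k (f k) (y::'m::type)"
  by (simp add: prod.lessThan_Suc)  

lemma chain_left:
  fixes W :: "nat \<Rightarrow> 'm \<Rightarrow> 'm \<Rightarrow> real"
  assumes fin: "\<And>i. finite (S i)"
    and al: "\<And>i y. i < k \<Longrightarrow> y \<in> S (Suc i) \<Longrightarrow> (\<Sum>x\<in>S i. W i x y) = \<alpha> i"
    and y: "y \<in> S k"
  shows "(\<Sum>f\<in>PiE {..<Suc k} S. if f k = y then (\<Prod>i<k. W i (f i) (f (Suc i))) else 0)
          = (\<Prod>i<k. \<alpha> i)"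
  using al y
proof (induction k arbitrary: y)
  case 0
  then show ?case by (simp add: sum_PiE_Suc fin)
next
  case (Suc k)
  define P where "P f = (\<Prod>i<k. W i (f i) (f (Suc i)))" for f
  have "(\<Sum>f\<in>PiE {..<Suc (Suc k)} S. if f (Suc k) = y then (\<Prod>i<Suc k. W i (f i) (f (Suc i))) else 0)
      = (\<Sum>f\<in>PiE {..<Suc k} S. P f * W k (f k) y)"
    unfolding sum_PiE_Suc[of _ "Suc k"]
    by (rule sum.cong, simp, simp add: prod_upd_Suc P_def fin Suc.prems if_distrib cong: if_cong)
  also have "\<dots> = (\<Sum>f\<in>PiE {..<Suc k} S. \<Sum>x\<in>S k. if f k = x then P f * W k x y else 0)"
    by (rule sum.cong, simp) (simp add: fin PiE_mem)
  also have "\<dots> = (\<Sum>x\<in>S k. (\<Sum>f\<in>PiE {..<Suc k} S. if f k = x then P f else 0) * W k x y)"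
    by (subst sum.swap, simp add: sum_distrib_right, intro sum.cong) auto
  also have "\<dots> = (\<Sum>x\<in>S k. (\<Prod>i<k. \<alpha> i) * W k x y)"
    proof (rule sum.cong, simp)
    fix x assume x: "x \<in> S k"
    have "(\<Sum>f\<in>PiE {..<Suc k} S. if f k = x then P f else 0) = (\<Prod>i<k. \<alpha> i)"
      unfolding P_def by (rule Suc.IH[OF Suc.prems(1)[OF less_SucI] x])
    then show "(\<Sum>f\<in>PiE {..<Suc k} S. if f k = x then P f else 0) * W k x y = (\<Prod>i<k. \<alpha> i) * W k x y" by simp
  qed
  also have "\<dots> = (\<Prod>i<Suc k. \<alpha> i)"
    by (simp add: sum_distrib_left[symmetric] Suc.prems)
  finally show ?case .
qed


lemma chain_right:
  fixes W :: "nat \<Rightarrow> 'm \<Rightarrow> 'm \<Rightarrow> real"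
  assumes fin: "\<And>i. finite (S i)"
    and al: "\<And>i y. i < m \<Longrightarrow> y \<in> S (Suc i) \<Longrightarrow> (\<Sum>x\<in>S i. W i x y) = \<alpha> i"
    and be: "\<And>i x. m \<le> i \<Longrightarrow> i < N \<Longrightarrow> x \<in> S i \<Longrightarrow> (\<Sum>y\<in>S (Suc i). W i x y) = \<beta> i"
    and c: "c \<in> S m" and mN: "m \<le> N"
  shows "(\<Sum>f\<in>PiE {..<Suc N} S. if f m = c then (\<Prod>i<N. W i (f i) (f (Suc i))) else 0)
          = (\<Prod>i<m. \<alpha> i) * (\<Prod>i\<in>{m..<N}. \<beta> i)"
  using mN be
proof (induction N rule: dec_induct)
  case base
  then show ?case using chain_left[of S m W \<alpha> c, OF fin al c] by simp
next
  case (step N)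
  define P where "P f = (if f m = c then (\<Prod>i<N. W i (f i) (f (Suc i))) else 0)" for f
  have "(\<Sum>f\<in>PiE {..<Suc (Suc N)} S. if f m = c then (\<Prod>i<Suc N. W i (f i) (f (Suc i))) else 0)
      = (\<Sum>f\<in>PiE {..<Suc N} S. \<Sum>y\<in>S (Suc N). P f * W N (f N) y)"
    unfolding sum_PiE_Suc[of _ "Suc N"]
    using step.hyps by (intro sum.cong refl) (simp add: prod_upd_Suc P_def)
  also have "\<dots> = (\<Sum>f\<in>PiE {..<Suc N} S. P f * \<beta> N)"
    by (intro sum.cong refl) (simp add: sum_distrib_left[symmetric] step.prems step.hyps PiE_mem)
  also have "\<dots> = (\<Prod>i<m. \<alpha> i) * (\<Prod>i\<in>{m..<N}. \<beta> i) * \<beta> N"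
    using step.IH step.prems by (simp add: sum_distrib_right[symmetric] P_def)
  also have "\<dots> = (\<Prod>i<m. \<alpha> i) * (\<Prod>i\<in>{m..<Suc N}. \<beta> i)"
    using step.hyps by (simp add: prod.atLeastLessThan_Suc)
  finally show ?case .
qed

lemma arith_aux:
  fixes A B C F G T D :: real
  assumes "A > 0" "B > 0" "C > 0" "F > 0" "G > 0" "T > 0" "D \<ge> 0" "D \<le> 2*C"
  shows "2*(3*T)*((2*A)*D*G)/((A*F)*(C*B*A*F)) \<le> 12*(2*T*G/(F*(B*A*F)))"
proof -
  have "2*(3*T)*((2*A)*D*G)/((A*F)*(C*B*A*F)) = (D/C) * (12*T*G/(F*(B*A*F)))"
    using assms by (simp add: field_simps)
  also have "\<dots> \<le> 2 * (12*T*G/(F*(B*A*F)))"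
    using assms by (intro mult_right_mono) (simp_all add: divide_le_eq)
  finally show ?thesis by simp
qed

lemma card_ratio:
  fixes Q :: "nat \<Rightarrow> 'm set"
  assumes cardQ: "\<And>k. real (card (Q k)) = 2 * 3 ^ k * fact (2 * k) / (fact k * fact (k + 2))"
  shows "real (card (Q k)) > 0" and "real (card (Q (Suc k))) \<le> 12 * real (card (Q k))"
proof -
  show "real (card (Q k)) > 0" unfolding cardQ by simp
  define A where "A = real (k+1)"
  define B where "B = real (k+2)"
  define C where "C = real (k+3)"
  define D where "D = real (2*k+1)"
  define F where "F = (fact k :: real)"
  define G where "G = (fact (2*k) :: real)"
  define T where "T = (3::real)^k"
  have f1: "(fact (2 * Suc k) :: real) = (2*A)*D*G"
    unfolding A_def D_def G_def by (simp add: algebra_simps)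
  have f2: "(fact (Suc k) :: real) = A * F" unfolding A_def F_def by (simp add: algebra_simps)
  have f3: "(fact (Suc k + 2) :: real) = C*B*A*F"
    unfolding A_def B_def C_def F_def by (simp add: algebra_simps numeral_eq_Suc)
  have f4: "(fact (k + 2) :: real) = B*A*F"
    unfolding A_def B_def F_def by (simp add: algebra_simps numeral_eq_Suc)
  have e1: "real (card (Q (Suc k))) = 2*(3*T)*((2*A)*D*G)/((A*F)*(C*B*A*F))"
    unfolding cardQ f1 f2 f3 T_def by simp
  have e2: "real (card (Q k)) = 2*T*G/(F*(B*A*F))"
    unfolding cardQ f4 T_def G_def F_def by simp
  show "real (card (Q (Suc k))) \<le> 12 * real (card (Q k))"
    unfolding e1 e2 by (rule arith_aux) (simp_all add: A_def B_def C_def D_def F_def G_def T_def)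
qed


lemma ratio_bound:
  fixes Q :: "nat \<Rightarrow> 'm set"
  assumes cardQ: "\<And>k. real (card (Q k)) = 2 * 3 ^ k * fact (2 * k) / (fact k * fact (k + 2))"
  shows "0 \<le> real (card (Q (Suc j))) / real (card (Q j))"
    and "real (card (Q (Suc j))) / real (card (Q j)) \<le> 12"
  using card_ratio[OF cardQ, of j] by (simp_all add: divide_le_eq)

lemma prod_le12:
  fixes f :: "nat \<Rightarrow> real"
  assumes "\<And>i. i \<in> I \<Longrightarrow> 0 \<le> f i \<and> f i \<le> 12"
  shows "0 \<le> prod f I" "prod f I \<le> 12 ^ card I"
  using assms by (auto intro: prod_nonneg prod_le_power)

theorem lemma6p1:
  fixes Q :: "nat \<Rightarrow> 'm set" and g :: "nat \<Rightarrow> 'm \<Rightarrow> 'm \<Rightarrow> real"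
    and n a b :: nat and l r :: 'm
  assumes finQ: "\<And>k. finite (Q k)"
    and cardQ: "\<And>k. real (card (Q k)) = 2 * 3 ^ k * fact (2 * k) / (fact k * fact (k + 2))"
    and g_nonneg: "\<And>k q q'. k \<ge> 1 \<Longrightarrow> q \<in> Q k \<Longrightarrow> q' \<in> Q (k - 1) \<Longrightarrow> g k q q' \<ge> 0"
    and g_row: "\<And>k q. k \<ge> 1 \<Longrightarrow> q \<in> Q k \<Longrightarrow> (\<Sum>q'\<in>Q (k - 1). g k q q') = 1"
    and g_col: "\<And>k q'. k \<ge> 1 \<Longrightarrow> q' \<in> Q (k - 1) \<Longrightarrow>
                 (\<Sum>q\<in>Q k. g k q q') = real (card (Q k)) / real (card (Q (k - 1)))"
    and n2: "n \<ge> 2" and apos: "a > 0" and bpos: "b > 0"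
    and an: "a < n - 1" and bn: "b < n"
    and l: "l \<in> Q a" and r: "r \<in> Q b"
  shows "(\<Sum>q\<in>Q n. \<Sum>q'\<in>Q (n - 1).
            Pmeas Q g n q q' {(L, R). L a = l \<and> R (n - b - 1) = r})
         \<le> 12 ^ (2 * n - b - a - 1)"
proof -
  define m where "m = n - b - 1"
  define A where "A = PiE {..<n} Q"
  define B where "B = PiE {..<n} (\<lambda>i. Q (n - 1 - i))"
  define \<rho> where "\<rho> = real (card (Q n)) / real (card (Q (n - 1)))"
  define PR where "PR R = (\<Prod>i<n - 1. g (n - i - 1) (R i) (R (Suc i)))" for R :: "nat \<Rightarrow> 'm"
  define PL where "PL L = (\<Prod>i<n - 1. g (Suc i) (L (Suc i)) (L i))" for L :: "nat \<Rightarrow> 'm"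
  define XR where "XR = (\<Sum>R\<in>B. if R m = r then PR R else 0)"
  define XL where "XL = (\<Sum>L\<in>A. if L a = l then PL L else 0)"
  define F where "F q q' L R = (if L a = l \<and> R m = r then Pweight g n q q' (L, R) else 0)" for q q' L R
  have finA: "finite A" unfolding A_def by (simp add: finite_PiE finQ)
  have finB: "finite B" unfolding B_def by (simp add: finite_PiE finQ)
  have pm: "Pmeas Q g n q q' {(L, R). L a = l \<and> R (n - b - 1) = r} = (\<Sum>L\<in>A. \<Sum>R\<in>B. F q q' L R)" for q q'
    unfolding Pmeas_def seq_space_def A_def[symmetric] B_def[symmetric]
    by (simp add: sum.inter_restrict finA finB sum.cartesian_product' F_def m_def)
  have sw: "(\<Sum>q\<in>Q n. \<Sum>q'\<in>Q (n - 1). \<Sum>L\<in>A. \<Sum>R\<in>B. F q q' L R)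
        = (\<Sum>L\<in>A. \<Sum>R\<in>B. \<Sum>q\<in>Q n. \<Sum>q'\<in>Q (n - 1). F q q' L R)"
  proof -
    have "(\<Sum>q\<in>Q n. \<Sum>q'\<in>Q (n - 1). \<Sum>L\<in>A. \<Sum>R\<in>B. F q q' L R)
        = (\<Sum>q\<in>Q n. \<Sum>L\<in>A. \<Sum>R\<in>B. \<Sum>q'\<in>Q (n - 1). F q q' L R)"
      by (intro sum.cong refl) (subst sum.swap, intro sum.cong refl, rule sum.swap)
    also have "\<dots> = (\<Sum>L\<in>A. \<Sum>R\<in>B. \<Sum>q\<in>Q n. \<Sum>q'\<in>Q (n - 1). F q q' L R)"
      by (subst sum.swap, intro sum.cong refl, rule sum.swap)
    finally show ?thesis .
  qed
  have pt: "(\<Sum>q\<in>Q n. \<Sum>q'\<in>Q (n - 1). F q q' L R)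
      = (\<rho> * (if R m = r then PR R else 0)) * (if L a = l then PL L else 0)"
    if L: "L \<in> A" and R: "R \<in> B" for L R
  proof -
    have R0: "R 0 \<in> Q (n - 1)" using PiE_mem[OF R[unfolded B_def], of 0] n2 by simp
    have Ln: "L (n - 1) \<in> Q (n - 1)" using PiE_mem[OF L[unfolded A_def], of "n - 1"] n2 by simp
    have pw: "Pweight g n q q' (L, R) = g n q (R 0) * (if L (n - 1) = q' then 1 else 0) * (PR R * PL L)" for q q'
      unfolding Pweight_def PR_def PL_def by (simp add: prod.distrib)
    define Z where "Z = PR R * PL L"
    have d: "(\<Sum>q'\<in>Q (n - 1). g n q (R 0) * (if L (n - 1) = q' then 1 else 0) * Z) = g n q (R 0) * Z" for q
    proof -
      have "(\<Sum>q'\<in>Q (n - 1). g n q (R 0) * (if L (n - 1) = q' then 1 else 0) * Z)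
          = (\<Sum>q'\<in>Q (n - 1). if L (n - 1) = q' then g n q (R 0) * Z else 0)"
        by (intro sum.cong refl) simp
      also have "\<dots> = g n q (R 0) * Z" using Ln by (simp add: finQ)
      finally show ?thesis .
    qed
    have "(\<Sum>q\<in>Q n. \<Sum>q'\<in>Q (n - 1). g n q (R 0) * (if L (n - 1) = q' then 1 else 0) * (PR R * PL L))
        = (\<Sum>q\<in>Q n. g n q (R 0)) * (PR R * PL L)"
      unfolding Z_def[symmetric] d by (simp add: sum_distrib_right)
    also have "(\<Sum>q\<in>Q n. g n q (R 0)) = \<rho>"
      unfolding \<rho>_def using g_col[of n "R 0"] n2 R0 by simp
    finally show ?thesis unfolding F_def pw by simp
  qed
  have total: "(\<Sum>q\<in>Q n. \<Sum>q'\<in>Q (n - 1).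
            Pmeas Q g n q q' {(L, R). L a = l \<and> R (n - b - 1) = r}) = \<rho> * XR * XL"
  proof -
    have "(\<Sum>q\<in>Q n. \<Sum>q'\<in>Q (n - 1).
            Pmeas Q g n q q' {(L, R). L a = l \<and> R (n - b - 1) = r})
        = (\<Sum>L\<in>A. \<Sum>R\<in>B. (\<rho> * (if R m = r then PR R else 0)) * (if L a = l then PL L else 0))"
      unfolding pm sw by (intro sum.cong refl) (rule pt)
    also have "\<dots> = (\<Sum>L\<in>A. (\<rho> * XR) * (if L a = l then PL L else 0))"
      by (intro sum.cong refl) (simp add: XR_def sum_distrib_left sum_distrib_right)
    also have "\<dots> = \<rho> * XR * XL"
      by (simp add: XL_def sum_distrib_left)
    finally show ?thesis .
  qed
  define \<alpha>R where "\<alpha>R i = real (card (Q (n - 1 - i))) / real (card (Q (n - 1 - i - 1)))" for i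
  define \<beta>L where "\<beta>L i = real (card (Q (Suc i))) / real (card (Q i))" for i
  have sn: "Suc (n - 1) = n" using n2 by simp
  have XR: "XR = (\<Prod>i<m. \<alpha>R i) * (\<Prod>i\<in>{m..<n - 1}. 1)"
  proof -
    have "(\<Sum>f\<in>PiE {..<Suc (n - 1)} (\<lambda>i. Q (n - 1 - i)).
             if f m = r then (\<Prod>i<n - 1. g (n - i - 1) (f i) (f (Suc i))) else 0)
          = (\<Prod>i<m. \<alpha>R i) * (\<Prod>i\<in>{m..<n - 1}. 1)"
    proof (rule chain_right)
      show "finite (Q (n - 1 - i))" for i by (rule finQ)
      show "r \<in> Q (n - 1 - m)" using r bn by (simp add: m_def)
      show "m \<le> n - 1" by (simp add: m_def)
      show "(\<Sum>x\<in>Q (n - 1 - i). g (n - i - 1) x y) = \<alpha>R i"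
        if "i < m" "y \<in> Q (n - 1 - Suc i)" for i y
      proof -
        have e1: "n - i - 1 = n - 1 - i" by simp
        have e2: "n - 1 - Suc i = n - 1 - i - 1" by simp
        show ?thesis unfolding e1 \<alpha>R_def
          using g_col[of "n - 1 - i" y] that unfolding e2 m_def by simp
      qed
      show "(\<Sum>y\<in>Q (n - 1 - Suc i). g (n - i - 1) x y) = 1"
        if "m \<le> i" "i < n - 1" "x \<in> Q (n - 1 - i)" for i x
      proof -
        have e1: "n - i - 1 = n - 1 - i" by simp
        have e2: "n - 1 - Suc i = n - 1 - i - 1" by simp
        show ?thesis unfolding e1 e2
          using g_row[of "n - 1 - i" x] that by simp
      qed
    qed
    then show ?thesis unfolding sn XR_def B_def PR_def .
  qed
  have XL: "XL = (\<Prod>i<a. 1) * (\<Prod>i\<in>{a..<n - 1}. \<beta>L i)"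
  proof -
    have "(\<Sum>f\<in>PiE {..<Suc (n - 1)} Q.
             if f a = l then (\<Prod>i<n - 1. g (Suc i) (f (Suc i)) (f i)) else 0)
          = (\<Prod>i<a. 1) * (\<Prod>i\<in>{a..<n - 1}. \<beta>L i)"
    proof (rule chain_right[where W = "\<lambda>i x y. g (Suc i) y x"])
      show "finite (Q i)" for i by (rule finQ)
      show "l \<in> Q a" by (rule l)
      show "a \<le> n - 1" using an by simp
      show "(\<Sum>x\<in>Q i. g (Suc i) y x) = 1" if "i < a" "y \<in> Q (Suc i)" for i y
        using g_row[of "Suc i" y] that by simp
      show "(\<Sum>y\<in>Q (Suc i). g (Suc i) y x) = \<beta>L i" if "a \<le> i" "i < n - 1" "x \<in> Q i" for i x
        using g_col[of "Suc i" x] that by (simp add: \<beta>L_def)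
    qed
    then show ?thesis unfolding sn XL_def A_def PL_def .
  qed
  have aR: "0 \<le> \<alpha>R i \<and> \<alpha>R i \<le> 12" if "i < m" for i
  proof -
    have e: "n - 1 - i = Suc (n - 1 - i - 1)" using that unfolding m_def by simp
    show ?thesis unfolding \<alpha>R_def
      using ratio_bound[OF cardQ, of "n - 1 - i - 1"] e by metis
  qed
  have bL: "0 \<le> \<beta>L i \<and> \<beta>L i \<le> 12" for i
    unfolding \<beta>L_def using ratio_bound[OF cardQ, of i] by simp
  have rho: "0 \<le> \<rho> \<and> \<rho> \<le> 12"
  proof -
    have e: "n = Suc (n - 1)" using n2 by simp
    show ?thesis unfolding \<rho>_def using ratio_bound[OF cardQ, of "n - 1"] e by metis
  qed
  have XR1: "0 \<le> XR" "XR \<le> 12 ^ m"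
    unfolding XR using prod_le12[of "{..<m}" \<alpha>R] aR by auto
  have XL1: "0 \<le> XL" "XL \<le> 12 ^ (n - 1 - a)"
    unfolding XL using prod_le12[of "{a..<n - 1}" \<beta>L] bL by auto
  have "\<rho> * XR * XL \<le> 12 * 12 ^ m * 12 ^ (n - 1 - a)"
    using rho XR1 XL1 by (intro mult_mono) (auto intro: mult_nonneg_nonneg)
  also have "\<dots> = 12 ^ (2 * n - b - a - 1)"
  proof -
    have "Suc (m + (n - 1 - a)) = 2 * n - b - a - 1" using an bn unfolding m_def by simp
    then show ?thesis by (metis power_add power_Suc mult.assoc)
  qed
  finally show ?thesis unfolding total .
qed

end
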